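(* Let $G$ be a network with two source nodes $s_x,s_y$ and terminal set $\mathcal T$, and let $(X,Y)\sim p_{X,Y}$ be generated i.i.d. at $s_x,s_y$. If $H(K_{X,Y})=I(X;Y)$, then whenever the multicast problem $(G,p_{X,Y})$ is feasible (i.e. $H(X\mid Y)\le\rho_G(s_x)$, $H(Y\mid X)\le\rho_G(s_y)$, $H(X,Y)\le\rho_G(s_x,s_y)$), it is feasible by source decomposition.
   Context: A network is an acyclic directed graph with integer edge capacities and a set of terminals $\mathcal T$; $\rho(A;t)$ is the min-cut value from node set $A$ to terminal $t$, and $\rho_G(s_x)=\min_{t}\rho(s_x;t)$, $\rho_G(s_y)=\min_t\rho(s_y;t)$, $\rho_G(s_x,s_y)=\min_t\rho(\{s_x,s_y\};t)$. Every terminal must recover both $X$ and $Y$. $K_{X,Y}$ is the Gács–Körner common information: the index of the connected component containing $(X,Y)$ of the bipartite graph on $\mathcal X\cup\mathcal Y$ with an edge $x$–$y$ iff $p_{X,Y}(x,y)>0$. Source decomposition writes $X\leftrightarrow (X',K_{X,Y})$, $Y\leftrightarrow(Y',K_{X,Y})$ bijectively ($X'$ = index of $X$'s value within its component). Feasible by source decomposition means: in the expanded network obtained by adding nodes $s_{X'},s_{Y'},s_K$ with infinite-capacity edges $s_{X'}\to s_x$, $s_{Y'}\to s_y$, $s_K\to s_x$, $s_K\to s_y$, multicasting independent sources at $s_{X'},s_{Y'},s_K$ with rates $H(X\mid K_{X,Y}),H(Y\mid K_{X,Y}),H(K_{X,Y})$ to all terminals is feasible, i.e. for every nonempty subset $S$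 of these three nodes the sum of their rates is at most the minimum over terminals of the min-cut from $S$ in the expanded network. *)

theory Defs
  imports "HOL-Probability.Probability_Mass_Function"
begin

text \<open>A network: finite node set V, capacity function (0 = no edge).
  Edges of the network are the pairs of nodes in V with positive capacity.\<close>

definition acyclic_network :: "'v set \<Rightarrow> ('v \<Rightarrow> 'v \<Rightarrow> nat) \<Rightarrow> bool" where
  "acyclic_network V cap \<longleftrightarrow> acyclic {(u, w). u \<in> V \<and> w \<in> V \<and> cap u w > 0}"

definition cut_value :: "'v set \<Rightarrow> ('v \<Rightarrow> 'v \<Rightarrow> ennreal) \<Rightarrow> 'v set \<Rightarrow> ennreal" where
  "cut_value V c S = (\<Sum>u\<in>S. \<Sum>w\<in>V - S. c u w)"

text \<open>min-cut value rho(A; t) from node set A to node t (infinite if no cut exists).\<close>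
definition mincut :: "'v set \<Rightarrow> ('v \<Rightarrow> 'v \<Rightarrow> ennreal) \<Rightarrow> 'v set \<Rightarrow> 'v \<Rightarrow> ennreal" where
  "mincut V c A t = (INF S \<in> {S. A \<subseteq> S \<and> S \<subseteq> V \<and> t \<notin> S}. cut_value V c S)"

definition rho :: "'v set \<Rightarrow> ('v \<Rightarrow> 'v \<Rightarrow> ennreal) \<Rightarrow> 'v set \<Rightarrow> 'v set \<Rightarrow> ennreal" where
  "rho V c T A = (INF t \<in> T. mincut V c A t)"

definition ecap :: "('v \<Rightarrow> 'v \<Rightarrow> nat) \<Rightarrow> 'v \<Rightarrow> 'v \<Rightarrow> ennreal" where
  "ecap cap u w = ennreal (real (cap u w))"

datatype 'v exnode = Orig 'v | SrcX' | SrcY' | SrcK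

definition ex_nodes :: "'v set \<Rightarrow> 'v exnode set" where
  "ex_nodes V = Orig ` V \<union> {SrcX', SrcY', SrcK}"

fun ex_cap :: "('v \<Rightarrow> 'v \<Rightarrow> nat) \<Rightarrow> 'v \<Rightarrow> 'v \<Rightarrow> 'v exnode \<Rightarrow> 'v exnode \<Rightarrow> ennreal" where
  "ex_cap cap sx sy (Orig u) (Orig w) = ecap cap u w"
| "ex_cap cap sx sy SrcX' (Orig w) = (if w = sx then \<infinity> else 0)"
| "ex_cap cap sx sy SrcY' (Orig w) = (if w = sy then \<infinity> else 0)"
| "ex_cap cap sx sy SrcK (Orig w) = (if w = sx \<or> w = sy then \<infinity> else 0)"
| "ex_cap cap sx sy _ _ = 0"

definition ent :: "'c pmf \<Rightarrow> real" where
  "ent q = - (\<Sum>z\<in>set_pmf q. pmf q z * log 2 (pmf q z))"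

definition H_XY :: "('a \<times> 'b) pmf \<Rightarrow> real" where "H_XY p = ent p"
definition H_X :: "('a \<times> 'b) pmf \<Rightarrow> real" where "H_X p = ent (map_pmf fst p)"
definition H_Y :: "('a \<times> 'b) pmf \<Rightarrow> real" where "H_Y p = ent (map_pmf snd p)"
definition H_X_given_Y :: "('a \<times> 'b) pmf \<Rightarrow> real" where "H_X_given_Y p = H_XY p - H_Y p"
definition H_Y_given_X :: "('a \<times> 'b) pmf \<Rightarrow> real" where "H_Y_given_X p = H_XY p - H_X p"
definition mutual_info :: "('a \<times> 'b) pmf \<Rightarrow> real" where
  "mutual_info p = H_X p + H_Y p - H_XY p"

definition gk_conn :: "('a \<times> 'b) pmf \<Rightarrow> (('a + 'b) \<times> ('a + 'b)) set" where
  "gk_conn p = (let E = {(Inl x, Inr y) | x y. pmf p (x, y) > 0} in (E \<union> E\<inverse>)\<^sup>*)"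

text \<open>K_{X,Y}: the connected component containing (X,Y) (the component itself serves as its index).\<close>
definition gk_K :: "('a \<times> 'b) pmf \<Rightarrow> 'a \<times> 'b \<Rightarrow> ('a + 'b) set" where
  "gk_K p xy = gk_conn p `` {Inl (fst xy)}"

definition H_K :: "('a \<times> 'b) pmf \<Rightarrow> real" where
  "H_K p = ent (map_pmf (gk_K p) p)"
definition H_X_given_K :: "('a \<times> 'b) pmf \<Rightarrow> real" where
  "H_X_given_K p = ent (map_pmf (\<lambda>z. (fst z, gk_K p z)) p) - H_K p"
definition H_Y_given_K :: "('a \<times> 'b) pmf \<Rightarrow> real" where
  "H_Y_given_K p = ent (map_pmf (\<lambda>z. (snd z, gk_K p z)) p) - H_K p"

definition multicast_feasible ::
  "'v set \<Rightarrow> ('v \<Rightarrow> 'v \<Rightarrow> nat) \<Rightarrow> 'v set \<Rightarrow> 'v \<Rightarrow> 'v \<Rightarrow> ('a \<times> 'b) pmf \<Rightarrow> bool" where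
  "multicast_feasible V cap T sx sy p \<longleftrightarrow>
     ennreal (H_X_given_Y p) \<le> rho V (ecap cap) T {sx} \<and>
     ennreal (H_Y_given_X p) \<le> rho V (ecap cap) T {sy} \<and>
     ennreal (H_XY p) \<le> rho V (ecap cap) T {sx, sy}"

definition decomp_rate :: "('a \<times> 'b) pmf \<Rightarrow> 'v exnode \<Rightarrow> real" where
  "decomp_rate p s = (case s of SrcX' \<Rightarrow> H_X_given_K p | SrcY' \<Rightarrow> H_Y_given_K p
                        | SrcK \<Rightarrow> H_K p | Orig _ \<Rightarrow> 0)"

definition feasible_by_source_decomposition ::
  "'v set \<Rightarrow> ('v \<Rightarrow> 'v \<Rightarrow> nat) \<Rightarrow> 'v set \<Rightarrow> 'v \<Rightarrow> 'v \<Rightarrow> ('a \<times> 'b) pmf \<Rightarrow> bool" where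
  "feasible_by_source_decomposition V cap T sx sy p \<longleftrightarrow>
     (\<forall>S. S \<subseteq> {SrcX', SrcY', SrcK} \<and> S \<noteq> {} \<longrightarrow>
        ennreal (\<Sum>s\<in>S. decomp_rate p s)
          \<le> rho (ex_nodes V) (ex_cap cap sx sy) (Orig ` T) S)"

end

theory Submission
  imports Defs
begin

lemma pmf_map_sum:
  assumes "finite (set_pmf q)"
  shows "pmf (map_pmf f q) y = (\<Sum>z\<in>{z\<in>set_pmf q. f z = y}. pmf q z)"
proof -
  have "pmf (map_pmf f q) y = measure q (f -` {y})" by (simp add: pmf_map)
  also have "\<dots> = measure q (f -` {y} \<inter> set_pmf q)" by (simp add: measure_Int_set_pmf)
  also have "\<dots> = (\<Sum>z\<in>f -` {y} \<inter> set_pmf q. pmf q z)"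
    using assms by (intro measure_measure_pmf_finite) auto
  also have "f -` {y} \<inter> set_pmf q = {z\<in>set_pmf q. f z = y}" by auto
  finally show ?thesis .
qed

lemma ent_map:
  assumes "finite (set_pmf q)"
  shows "ent (map_pmf f q) = - (\<Sum>z\<in>set_pmf q. pmf q z * log 2 (pmf (map_pmf f q) (f z)))"
proof -
  let ?P = "pmf (map_pmf f q)"
  have "(\<Sum>y\<in>set_pmf (map_pmf f q). ?P y * log 2 (?P y))
      = (\<Sum>y\<in>f ` set_pmf q. \<Sum>z\<in>{z\<in>set_pmf q. f z = y}. pmf q z * log 2 (?P y))"
    by (simp add: pmf_map_sum[OF assms] sum_distrib_right)
  also have "\<dots> = (\<Sum>y\<in>f ` set_pmf q. \<Sum>z\<in>{z\<in>set_pmf q. f z = y}. pmf q z * log 2 (?P (f z)))"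
    by (intro sum.cong refl) auto
  also have "\<dots> = (\<Sum>z\<in>set_pmf q. pmf q z * log 2 (?P (f z)))"
    using sum.image_gen[OF assms, of "\<lambda>z. pmf q z * log 2 (?P (f z))" f] by simp
  finally show ?thesis unfolding ent_def by simp
qed

lemma ent_map_le:
  assumes "finite (set_pmf q)"
  shows "ent (map_pmf f q) \<le> ent q"
proof -
  have "(\<Sum>z\<in>set_pmf q. pmf q z * log 2 (pmf q z))
        \<le> (\<Sum>z\<in>set_pmf q. pmf q z * log 2 (pmf (map_pmf f q) (f z)))"
  proof (intro sum_mono)
    fix z assume z: "z \<in> set_pmf q"
    have pos: "pmf q z > 0" using z by (simp add: pmf_positive)
    have "pmf q z = measure q {z}" by (simp add: measure_pmf_single)
    also have "\<dots> \<le> measure q (f -` {f z})" by (intro measure_pmf.finite_measure_mono) auto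
    also have "\<dots> = pmf (map_pmf f q) (f z)" by (simp add: pmf_map)
    finally have le: "pmf q z \<le> pmf (map_pmf f q) (f z)" .
    then have "log 2 (pmf q z) \<le> log 2 (pmf (map_pmf f q) (f z))"
      using pos by simp
    then show "pmf q z * log 2 (pmf q z) \<le> pmf q z * log 2 (pmf (map_pmf f q) (f z))"
      using pos by (intro mult_left_mono) auto
  qed
  then show ?thesis unfolding ent_map[OF assms] ent_def[of q] by simp
qed

lemma ent_map_inj:
  assumes "finite (set_pmf q)" "inj_on f (set_pmf q)"
  shows "ent (map_pmf f q) = ent q"
proof -
  have "(\<Sum>z\<in>set_pmf q. pmf q z * log 2 (pmf (map_pmf f q) (f z)))
        = (\<Sum>z\<in>set_pmf q. pmf q z * log 2 (pmf q z))"
    by (intro sum.cong refl) (simp add: pmf_map_inj[OF assms(2)])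
  then show ?thesis unfolding ent_map[OF assms(1)] ent_def[of q] by simp
qed

lemma ent_nonneg: "ent q \<ge> 0"
proof -
  have "(\<Sum>z\<in>set_pmf q. pmf q z * log 2 (pmf q z)) \<le> 0"
  proof (intro sum_nonpos)
    fix z assume z: "z \<in> set_pmf q"
    have pos: "pmf q z > 0" using z by (simp add: pmf_positive)
    have "log 2 (pmf q z) \<le> 0" using pos pmf_le_1[of q z] by simp
    then show "pmf q z * log 2 (pmf q z) \<le> 0" using pos by (simp add: mult_nonneg_nonpos)
  qed
  then show ?thesis unfolding ent_def by simp
qed

definition AS :: "'v \<Rightarrow> 'v \<Rightarrow> 'v exnode set \<Rightarrow> 'v set" where
  "AS sx sy S = (if SrcX' \<in> S \<or> SrcK \<in> S then {sx} else {}) \<union> (if SrcY' \<in> S \<or> SrcK \<in> S then {sy} else {})"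

lemma ex_mincut_ge:
  assumes fin: "finite V" and S: "S \<subseteq> {SrcX', SrcY', SrcK}" and sx: "sx \<in> V" and sy: "sy \<in> V"
  shows "mincut V (ecap cap) (AS sx sy S) t \<le> mincut (ex_nodes V) (ex_cap cap sx sy) S (Orig t)"
  unfolding mincut_def[of "ex_nodes V"]
proof (intro INF_greatest)
  fix C assume "C \<in> {C. S \<subseteq> C \<and> C \<subseteq> ex_nodes V \<and> Orig t \<notin> C}"
  then have SC: "S \<subseteq> C" and CV: "C \<subseteq> ex_nodes V" and tC: "Orig t \<notin> C" by auto
  have finex: "finite (ex_nodes V)" using fin by (simp add: ex_nodes_def)
  have finC: "finite C" using finite_subset[OF CV finex] .
  define C' where "C' = {v\<in>V. Orig v \<in> C}"
  show "mincut V (ecap cap) (AS sx sy S) t \<le> cut_value (ex_nodes V) (ex_cap cap sx sy) C"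
  proof (cases "AS sx sy S \<subseteq> C'")
    case True
    have tC': "t \<notin> C'" using tC by (simp add: C'_def)
    have "mincut V (ecap cap) (AS sx sy S) t \<le> cut_value V (ecap cap) C'"
      unfolding mincut_def using True tC' by (intro INF_lower) (auto simp: C'_def)
    also have "cut_value V (ecap cap) C'
        = (\<Sum>u\<in>Orig ` C'. \<Sum>w\<in>Orig ` (V - C'). ex_cap cap sx sy u w)"
      unfolding cut_value_def
      by (simp add: sum.reindex inj_on_def)
    also have "\<dots> \<le> (\<Sum>u\<in>Orig ` C'. \<Sum>w\<in>ex_nodes V - C. ex_cap cap sx sy u w)"
      using finex by (intro sum_mono sum_mono2) (auto simp: C'_def ex_nodes_def)
    also have "\<dots> \<le> (\<Sum>u\<in>C. \<Sum>w\<in>ex_nodes V - C. ex_cap cap sx sy u w)"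
      by (intro sum_mono2 finC) (auto simp: C'_def)
    finally show ?thesis unfolding cut_value_def .
  next
    case False
    then obtain a where aA: "a \<in> AS sx sy S" and aC: "a \<notin> C'" by auto
    have aV: "a \<in> V" using aA sx sy by (auto simp: AS_def split: if_splits)
    have aC2: "Orig a \<notin> C" using aC aV by (simp add: C'_def)
    obtain s where sS: "s \<in> S" and inf: "ex_cap cap sx sy s (Orig a) = \<infinity>"
      using aA S by (auto simp: AS_def split: if_splits)
    have "ex_cap cap sx sy s (Orig a) \<le> (\<Sum>w\<in>ex_nodes V - C. ex_cap cap sx sy s w)"
      using aC2 aV finex by (intro member_le_sum) (auto simp: ex_nodes_def)
    also have "\<dots> \<le> (\<Sum>u\<in>C. \<Sum>w\<in>ex_nodes V - C. ex_cap cap sx sy u w)"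
      using sS SC finC by (intro member_le_sum) auto
    finally have "cut_value (ex_nodes V) (ex_cap cap sx sy) C = \<infinity>"
      using inf unfolding cut_value_def by (simp add: top_unique)
    then show ?thesis by simp
  qed
qed

lemma ex_rho_ge:
  assumes "finite V" "S \<subseteq> {SrcX', SrcY', SrcK}" "sx \<in> V" "sy \<in> V"
  shows "rho V (ecap cap) T (AS sx sy S) \<le> rho (ex_nodes V) (ex_cap cap sx sy) (Orig ` T) S"
  unfolding rho_def
  by (intro INF_mono) (auto intro: ex_mincut_ge[OF assms])

theorem corollary2:
  fixes V :: "'v set" and cap :: "'v \<Rightarrow> 'v \<Rightarrow> nat" and T :: "'v set"
    and sx sy :: 'v and p :: "('a \<times> 'b) pmf"
  assumes "finite V" and "acyclic_network V cap"
    and "sx \<in> V" and "sy \<in> V" and "sx \<noteq> sy"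
    and "T \<subseteq> V" and "T \<noteq> {}"
    and "finite (set_pmf p)"
    and "H_K p = mutual_info p"
    and "multicast_feasible V cap T sx sy p"
  shows "feasible_by_source_decomposition V cap T sx sy p"
proof -
  note fin = assms(8)
  define R where "R = gk_conn p"
  have symR: "sym R" unfolding R_def gk_conn_def Let_def
    by (intro sym_rtrancl) (auto simp: sym_def)
  have transR: "trans R" unfolding R_def gk_conn_def Let_def by (rule trans_rtrancl)
  have eqv: "R `` {a} = R `` {b}" if "(a, b) \<in> R" for a b
    using that symR transR unfolding sym_def trans_def by blast
  have finX: "finite (set_pmf (map_pmf fst p))" using fin by simp
  have finY: "finite (set_pmf (map_pmf snd p))" using fin by simp
  have HXK: "ent (map_pmf (\<lambda>z. (fst z, gk_K p z)) p) = H_X p"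
  proof -
    have "map_pmf (\<lambda>z. (fst z, gk_K p z)) p = map_pmf (\<lambda>x. (x, R `` {Inl x})) (map_pmf fst p)"
      by (simp add: pmf.map_comp o_def gk_K_def R_def)
    moreover have "ent (map_pmf (\<lambda>x. (x, R `` {Inl x})) (map_pmf fst p)) = ent (map_pmf fst p)"
      by (intro ent_map_inj finX) (auto simp: inj_on_def)
    ultimately show ?thesis by (simp add: H_X_def)
  qed
  have HYK: "ent (map_pmf (\<lambda>z. (snd z, gk_K p z)) p) = H_Y p"
  proof -
    have "map_pmf (\<lambda>z. (snd z, gk_K p z)) p = map_pmf (\<lambda>z. (snd z, R `` {Inr (snd z)})) p"
    proof (intro map_pmf_cong refl)
      fix z assume z: "z \<in> set_pmf p"
      obtain x y where zxy: "z = (x, y)" by force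
      have "pmf p (x, y) > 0" using z zxy by (simp add: pmf_positive)
      then have "(Inl x, Inr y) \<in> R" unfolding R_def gk_conn_def Let_def by blast
      then show "(snd z, gk_K p z) = (snd z, R `` {Inr (snd z)})"
        using eqv zxy by (simp add: gk_K_def R_def)
    qed
    also have "\<dots> = map_pmf (\<lambda>y. (y, R `` {Inr y})) (map_pmf snd p)"
      by (simp add: pmf.map_comp o_def)
    finally have e: "map_pmf (\<lambda>z. (snd z, gk_K p z)) p = map_pmf (\<lambda>y. (y, R `` {Inr y})) (map_pmf snd p)" .
    have "ent (map_pmf (\<lambda>y. (y, R `` {Inr y})) (map_pmf snd p)) = ent (map_pmf snd p)"
      by (intro ent_map_inj finY) (auto simp: inj_on_def)
    then show ?thesis using e by (simp add: H_Y_def)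
  qed
  have a: "H_X_given_K p = H_X_given_Y p"
    using HXK assms(9) by (simp add: H_X_given_K_def H_X_given_Y_def mutual_info_def)
  have b: "H_Y_given_K p = H_Y_given_X p"
    using HYK assms(9) by (simp add: H_Y_given_K_def H_Y_given_X_def mutual_info_def)
  have an: "H_X_given_Y p \<ge> 0"
    using ent_map_le[OF fin, of snd] by (simp add: H_X_given_Y_def H_XY_def H_Y_def)
  have bn: "H_Y_given_X p \<ge> 0"
    using ent_map_le[OF fin, of fst] by (simp add: H_Y_given_X_def H_XY_def H_X_def)
  have cn: "H_K p \<ge> 0" by (simp add: H_K_def ent_nonneg)
  have tot: "H_X_given_K p + H_Y_given_K p + H_K p = H_XY p"
    using a b assms(9) by (simp add: H_X_given_Y_def H_Y_given_X_def mutual_info_def)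
  have dn: "decomp_rate p s \<ge> 0" if "s \<in> {SrcX', SrcY', SrcK}" for s :: "'v exnode"
    using that a b an bn cn by (auto simp: decomp_rate_def)
  have feas: "ennreal (H_X_given_Y p) \<le> rho V (ecap cap) T {sx}"
    "ennreal (H_Y_given_X p) \<le> rho V (ecap cap) T {sy}"
    "ennreal (H_XY p) \<le> rho V (ecap cap) T {sx, sy}"
    using assms(10) unfolding multicast_feasible_def by auto
  show ?thesis unfolding feasible_by_source_decomposition_def
  proof (intro allI impI)
    fix S :: "'v exnode set" assume "S \<subseteq> {SrcX', SrcY', SrcK} \<and> S \<noteq> {}"
    then have S: "S \<subseteq> {SrcX', SrcY', SrcK}" and Sne: "S \<noteq> {}" by auto
    note ge = ex_rho_ge[OF assms(1) S assms(3) assms(4), of cap T]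
    show "ennreal (\<Sum>s\<in>S. decomp_rate p s) \<le> rho (ex_nodes V) (ex_cap cap sx sy) (Orig ` T) S"
    proof (cases "S = {SrcX'}")
      case True
      then have "AS sx sy S = {sx}" by (simp add: AS_def)
      then show ?thesis using True ge feas(1) a by (simp add: decomp_rate_def)
    next
      case F1: False
      show ?thesis
      proof (cases "S = {SrcY'}")
        case True
        then have "AS sx sy S = {sy}" by (simp add: AS_def)
        then show ?thesis using True ge feas(2) b by (simp add: decomp_rate_def)
      next
        case F2: False
        have h1: "SrcX' \<in> S \<or> SrcK \<in> S"
        proof (rule ccontr)
          assume "\<not> (SrcX' \<in> S \<or> SrcK \<in> S)"
          then have "S \<subseteq> {SrcY'}" using S by blast
          then have "S = {SrcY'}" using Sne by (simp add: subset_singleton_iff)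
          then show False using F2 by simp
        qed
        have h2: "SrcY' \<in> S \<or> SrcK \<in> S"
        proof (rule ccontr)
          assume "\<not> (SrcY' \<in> S \<or> SrcK \<in> S)"
          then have "S \<subseteq> {SrcX'}" using S by blast
          then have "S = {SrcX'}" using Sne by (simp add: subset_singleton_iff)
          then show False using F1 by simp
        qed
        have "AS sx sy S = {sx, sy}"
          using h1 h2 unfolding AS_def by (simp add: insert_commute)
        moreover have "(\<Sum>s\<in>S. decomp_rate p s) \<le> (\<Sum>s\<in>{SrcX', SrcY', SrcK::'v exnode}. decomp_rate p s)"
          using S dn by (intro sum_mono2[of "{SrcX', SrcY', SrcK}"]) auto
        moreover have "(\<Sum>s\<in>{SrcX', SrcY', SrcK::'v exnode}. decomp_rate p s) = H_XY p"
          using tot by (simp add: decomp_rate_def)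
        ultimately have "ennreal (\<Sum>s\<in>S. decomp_rate p s) \<le> ennreal (H_XY p)"
          and AA: "AS sx sy S = {sx, sy}"
          by (auto intro: ennreal_leI)
        then have "ennreal (\<Sum>s\<in>S. decomp_rate p s) \<le> rho V (ecap cap) T (AS sx sy S)"
          using feas(3) by (simp add: order_trans)
        then show ?thesis using ge by (rule order_trans)
      qed
    qed
  qed
qed

end
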